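(* Let $C_n(a,b)$ be a connected $2$-regular circulant digraph, and let $l\ge1$, $0\le k\le l$ with $la+k(b-a)=\omega n$ for a positive integer $\omega$. Then for each $p\in\mathcal{P}_{l,k}(C_n(a,b))$ there exist a positive integer $q$ with $q\mid\gcd(l,k)$ and $\gcd(q,\omega)=1$, a word $w\in\mathbb{L}_2^q(l,k)$, and a vertex $v$ such that $p=\varphi(w,v)$.
   Context: Let $n\ge 2$ and $0<a<b<n$ be integers with $\gcd(n,a,b)=1$. $C_n(a,b)$ has vertex set $\mathbb{Z}_n$ and directed bonds $(v,v+a)$, $(v,v+b)$ (addition mod $n$), with step sizes $a$, $b$. A path of length $l$ is a sequence of bonds $(e_1,\dots,e_l)$ with the terminus of $e_j$ equal to the origin of $e_{j+1}$; its $b$-count is the number of bonds of step size $b$; its step sequence is the sequence of step sizes; a circuit is a path whose last terminus equals its first origin. A periodic orbit is an equivalence class of circuits under cyclic rotation; it is primitive if it is not $[c_0^r]$ for a circuit $c_0$ and $r>1$ ($c_0^r$ = concatenation of $r$ copies). $\mathcal{P}_{l,k}(C_n(a,b))$ is the set of primitive periodic orbits of length $l$ and $b$-count $k$. Words over $\{a,b\}$ are ordered lexicographically with $a\prec b$; a word is Lyndon if strictly smaller than all its nontrivial cyclic rotations; $\mathbb{L}_2(l,k)$ is the set of Lyndon words of length $l$ with exactly $k$ letters $b$, and for $q\mid\gcd(l,k)$, $\mathbb{L}_2^q(l,k)=\{x^q: x\in\mathbb{L}_2(l/q,k/q)\}$. Identifying letters $a,b$ with step sizes $a,b$, $\psi(w,v)$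 is the unique path starting at vertex $v$ with step sequence $w$; when it is a circuit, $\varphi(w,v)=[\psi(w,v)]$. *)

theory Defs
  imports Main
begin

text \<open>Circulant digraph C_n(a,b): vertices 0..<n (representing Z_n), bonds are
  pairs (origin, terminus) of the form (v, (v+a) mod n) or (v, (v+b) mod n).\<close>

type_synonym bond = "nat \<times> nat"

definition bonds :: "nat \<Rightarrow> nat \<Rightarrow> nat \<Rightarrow> bond set" where
  "bonds n a b = {(v, (v + a) mod n) | v. v < n} \<union> {(v, (v + b) mod n) | v. v < n}"

definition is_path :: "nat \<Rightarrow> nat \<Rightarrow> nat \<Rightarrow> bond list \<Rightarrow> bool" where
  "is_path n a b c \<longleftrightarrow> set c \<subseteq> bonds n a b \<and>
     (\<forall>i. Suc i < length c \<longrightarrow> snd (c ! i) = fst (c ! Suc i))"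

definition is_circuit :: "nat \<Rightarrow> nat \<Rightarrow> nat \<Rightarrow> bond list \<Rightarrow> bool" where
  "is_circuit n a b c \<longleftrightarrow> c \<noteq> [] \<and> is_path n a b c \<and> snd (last c) = fst (hd c)"

definition bcount :: "nat \<Rightarrow> nat \<Rightarrow> bond list \<Rightarrow> nat" where
  "bcount n b c = length (filter (\<lambda>(u, v). v = (u + b) mod n) c)"

definition orbit :: "bond list \<Rightarrow> bond list set" where
  "orbit c = {rotate i c | i. i < length c}"

definition primitive_orbit :: "nat \<Rightarrow> nat \<Rightarrow> nat \<Rightarrow> bond list set \<Rightarrow> bool" where
  "primitive_orbit n a b p \<longleftrightarrow>
     \<not> (\<exists>c0 r. r > 1 \<and> is_circuit n a b c0 \<and> p = orbit (concat (replicate r c0)))"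

definition prim_orbits :: "nat \<Rightarrow> nat \<Rightarrow> nat \<Rightarrow> nat \<Rightarrow> nat \<Rightarrow> bond list set set" where
  "prim_orbits n a b l k =
     {orbit c | c. is_circuit n a b c \<and> length c = l \<and> bcount n b c = k
                  \<and> primitive_orbit n a b (orbit c)}"

datatype letter = La | Lb

definition letter_less :: "(letter \<times> letter) set" where
  "letter_less = {(La, Lb)}"

definition lyndon :: "letter list \<Rightarrow> bool" where
  "lyndon w \<longleftrightarrow> w \<noteq> [] \<and>
     (\<forall>i. 0 < i \<and> i < length w \<longrightarrow> (w, rotate i w) \<in> lexord letter_less)"

definition L2 :: "nat \<Rightarrow> nat \<Rightarrow> letter list set" where
  "L2 l k = {w. lyndon w \<and> length w = l \<and> count_list w Lb = k}"

definition L2q :: "nat \<Rightarrow> nat \<Rightarrow> nat \<Rightarrow> letter list set" where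
  "L2q q l k = {concat (replicate q x) | x. x \<in> L2 (l div q) (k div q)}"

definition step :: "nat \<Rightarrow> nat \<Rightarrow> letter \<Rightarrow> nat" where
  "step a b x = (case x of La \<Rightarrow> a | Lb \<Rightarrow> b)"

fun psi :: "nat \<Rightarrow> nat \<Rightarrow> nat \<Rightarrow> letter list \<Rightarrow> nat \<Rightarrow> bond list" where
  "psi n a b [] v = []"
| "psi n a b (x # w) v = (v, (v + step a b x) mod n) # psi n a b w ((v + step a b x) mod n)"

definition phi :: "nat \<Rightarrow> nat \<Rightarrow> nat \<Rightarrow> letter list \<Rightarrow> nat \<Rightarrow> bond list set" where
  "phi n a b w v = orbit (psi n a b w v)"

end

theory Submission
  imports Defs
begin

fun dig :: "letter \<Rightarrow> nat" where "dig La = 0" | "dig Lb = 1"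

fun val :: "letter list \<Rightarrow> nat" where
  "val [] = 0" | "val (x # w) = dig x * 2 ^ length w + val w"

lemma val_lt: "val w < 2 ^ length w"
proof (induction w)
  case (Cons x w) then show ?case by (cases x) auto
qed simp

lemma val_append: "val (u @ v) = val u * 2 ^ length v + val v"
  by (induction u) (auto simp: algebra_simps power_add)

lemma val_inj: "length u = length v \<Longrightarrow> val u = val v \<Longrightarrow> u = v"
proof (induction u arbitrary: v)
  case Nil then show ?case by simp
next
  case (Cons x u)
  then obtain y v' where v: "v = y # v'" by (cases v) auto
  with Cons.prems have l: "length u = length v'" by simp
  have "x = y"
  proof (rule ccontr)
    assume "x \<noteq> y"
    then have "(x = La \<and> y = Lb) \<or> (x = Lb \<and> y = La)" by (cases x; cases y) auto
    then show False using Cons.prems v l val_lt[of u] val_lt[of v'] by auto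
  qed
  then show ?case using Cons v l by auto
qed

lemma val_lexord: "length u = length v \<Longrightarrow> val u < val v \<Longrightarrow> (u, v) \<in> lexord letter_less"
proof (induction u arbitrary: v)
  case Nil then show ?case by simp
next
  case (Cons x u)
  then obtain y v' where v: "v = y # v'" by (cases v) auto
  with Cons.prems have l: "length u = length v'" by simp
  show ?case
  proof (cases "x = y")
    case True then show ?thesis using Cons v l by auto
  next
    case False
    then have "(x = La \<and> y = Lb) \<or> (x = Lb \<and> y = La)" by (cases x; cases y) auto
    then show ?thesis using Cons.prems v l val_lt[of u] val_lt[of v'] by (auto simp: letter_less_def)
  qed
qed

abbreviation pw :: "nat \<Rightarrow> 'a list \<Rightarrow> 'a list" where "pw q x \<equiv> concat (replicate q x)"

lemma length_pw[simp]: "length (pw q x) = q * length x"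
  by (induction q) auto

lemma count_pw: "count_list (pw q x) y = q * count_list x y"
  by (induction q) auto

lemma pw_mult: "pw q (pw r y) = pw (q * r) y"
  by (induction q) (auto simp: replicate_add)

lemma nth_pw: "j < q * length x \<Longrightarrow> pw q x ! j = x ! (j mod length x)"
proof (induction q arbitrary: j)
  case 0 then show ?case by simp
next
  case (Suc q)
  show ?case
  proof (cases "j < length x")
    case True then show ?thesis by (simp add: nth_append)
  next
    case False
    then have "pw (Suc q) x ! j = pw q x ! (j - length x)" by (simp add: nth_append)
    also have "\<dots> = x ! ((j - length x) mod length x)" using Suc False by auto
    also have "(j - length x) mod length x = j mod length x" using False
      by (simp add: le_mod_geq)
    finally show ?thesis .
  qed
qed

lemma rotate_pw: "rotate i (pw q x) = pw q (rotate i x)"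
proof (cases "x = [] \<or> q = 0")
  case True then show ?thesis by auto
next
  case False
  then have L: "length x > 0" "q > 0" by auto
  show ?thesis
  proof (rule nth_equalityI)
    show "length (rotate i (pw q x)) = length (pw q (rotate i x))" by simp
    fix j assume "j < length (rotate i (pw q x))"
    then have j: "j < q * length x" by simp
    have "rotate i (pw q x) ! j = x ! (((i + j) mod (q * length x)) mod length x)"
      using j L by (simp add: nth_rotate nth_pw)
    also have "\<dots> = x ! ((i + j) mod length x)" by (simp add: mod_mod_cancel)
    also have "\<dots> = x ! ((i + j mod length x) mod length x)" by (simp add: mod_add_right_eq)
    also have "\<dots> = pw q (rotate i x) ! j" using j L by (simp add: nth_rotate nth_pw)
    finally show "rotate i (pw q x) ! j = pw q (rotate i x) ! j" .
  qed
qed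

lemma val_pw_mono: "length y = length x \<Longrightarrow> val y < val x \<Longrightarrow> 0 < q \<Longrightarrow> val (pw q y) < val (pw q x)"
proof -
  assume l: "length y = length x" and lt: "val y < val x" and q: "0 < q"
  then obtain q' where q': "q = Suc q'" by (cases q) auto
  let ?N = "2 ^ (q' * length x)"
  have "val (pw q y) = val y * ?N + val (pw q' y)" using q' l by (simp add: val_append)
  also have "\<dots> < (val y + 1) * ?N" using val_lt[of "pw q' y"] l by simp
  also have "\<dots> \<le> val x * ?N" using lt by (intro mult_right_mono) auto
  also have "\<dots> \<le> val (pw q x)" using q' by (simp add: val_append)
  finally show ?thesis .
qed

lemma rotate_mult: "rotate i x = x \<Longrightarrow> rotate (u * i) x = x"
  by (induction u) (auto simp: rotate_rotate[symmetric])

lemma rotate_gcd: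
  assumes r: "rotate i x = x" and i: "0 < i" "i < length x"
  shows "rotate (gcd i (length x)) x = x"
proof -
  obtain u w where e: "i * u = length x * w + gcd i (length x)" using bezout_nat[of i "length x"] i by auto
  have "gcd i (length x) \<le> i" using i by (simp add: gcd_le1_nat)
  then have g: "gcd i (length x) < length x" using i by linarith
  have "x = rotate (u * i) x" using rotate_mult[OF r] by simp
  also have "\<dots> = rotate ((length x * w + gcd i (length x)) mod length x) x"
    using e by (metis mult.commute rotate_conv_mod)
  also have "\<dots> = rotate (gcd i (length x)) x" using g by simp
  finally show ?thesis by simp
qed

lemma rotate_period:
  assumes r: "rotate g x = x" and g: "0 < g" "g dvd length x" and ne: "x \<noteq> []"
  shows "x = pw (length x div g) (take g x)"
proof -
  have step: "x ! (j - g) = x ! j" if "g \<le> j" "j < length x" for j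
  proof -
    have "x ! (j - g) = rotate g x ! (j - g)" using r by simp
    also have "\<dots> = x ! ((g + (j - g)) mod length x)" using that by (simp add: nth_rotate)
    also have "\<dots> = x ! j" using that by simp
    finally show ?thesis .
  qed
  have per: "j < length x \<Longrightarrow> x ! j = x ! (j mod g)" for j
  proof (induction j rule: less_induct)
    case (less j)
    show ?case
    proof (cases "j < g")
      case True then show ?thesis by simp
    next
      case False
      then have "x ! j = x ! (j - g)" using step less.prems by simp
      also have "\<dots> = x ! ((j - g) mod g)" using less False g by simp
      also have "(j - g) mod g = j mod g" using False by (simp add: le_mod_geq)
      finally show ?thesis .
    qed
  qed
  have gl: "g \<le> length x" using g ne by (simp add: dvd_imp_le)
  show ?thesis
  proof (rule nth_equalityI)
    show "length x = length (pw (length x div g) (take g x))" using gl g by simp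
    fix j assume j: "j < length x"
    have "pw (length x div g) (take g x) ! j = take g x ! (j mod g)"
      using j gl g by (subst nth_pw) (auto simp: min_def)
    also have "\<dots> = x ! j" using per[OF j] g by simp
    finally show "x ! j = pw (length x div g) (take g x) ! j" by simp
  qed
qed

lemma word_lemma:
  assumes s: "s \<noteq> []"
  shows "\<exists>i q x. 0 < q \<and> rotate i s = pw q x \<and> lyndon x"
proof -
  define l where "l = length s"
  have l0: "0 < l" using s l_def by simp
  define M where "M = Min ((\<lambda>i. val (rotate i s)) ` {..<l})"
  have "M \<in> (\<lambda>i. val (rotate i s)) ` {..<l}" unfolding M_def using l0 by (intro Min_in) auto
  then obtain i0 where i0: "i0 < l" "val (rotate i0 s) = M" by auto
  define m where "m = rotate i0 s"
  have lm: "length m = l" by (simp add: m_def l_def)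
  have mmin: "val m \<le> val (rotate j m)" for j
  proof -
    have "rotate j m = rotate ((j + i0) mod l) s" by (simp add: m_def rotate_rotate l_def flip: rotate_conv_mod)
    moreover have "M \<le> val (rotate ((j + i0) mod l) s)" unfolding M_def using l0 by (intro Min_le) auto
    ultimately show ?thesis using i0 m_def by simp
  qed
  define P where "P = {p. 0 < p \<and> p dvd l \<and> m = pw (l div p) (take p m)}"
  have "l \<in> P" using l0 lm by (simp add: P_def)
  define p0 where "p0 = Least (\<lambda>p. p \<in> P)"
  have p0P: "p0 \<in> P" using \<open>l \<in> P\<close> unfolding p0_def by (rule LeastI)
  have p0min: "p \<in> P \<Longrightarrow> p0 \<le> p" for p unfolding p0_def by (rule Least_le)
  have p0: "0 < p0" "p0 dvd l" using p0P by (auto simp: P_def)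
  have p0l: "p0 \<le> l" using p0 l0 by (simp add: dvd_imp_le)
  define x where "x = take p0 m"
  define q where "q = l div p0"
  have lx: "length x = p0" using p0l lm by (simp add: x_def)
  have mx: "m = pw q x" using p0P by (simp add: P_def x_def q_def)
  have q0: "0 < q" using p0 l0 p0l by (simp add: q_def div_greater_zero_iff)
  have lyn: "lyndon x"
    unfolding lyndon_def
  proof (intro conjI allI impI)
    show "x \<noteq> []" using lx p0 by auto
    fix i assume i: "0 < i \<and> i < length x"
    have le: "val (pw q x) \<le> val (pw q (rotate i x))"
      using mmin[of i] mx by (simp add: rotate_pw)
    have ne: "rotate i x \<noteq> x"
    proof
      assume r: "rotate i x = x"
      define g where "g = gcd i (length x)"
      have rg: "rotate g x = x" using rotate_gcd[OF r] i by (simp add: g_def)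
      have g0: "0 < g" using i by (simp add: g_def)
      have gd: "g dvd length x" by (simp add: g_def)
      have glt: "g < p0" using i lx g_def gcd_le1_nat[of i "length x"] by linarith
      have xne: "x \<noteq> []" using i by auto
      have xg: "x = pw (length x div g) (take g x)" using rotate_period[OF rg g0 gd xne] .
      have mg: "m = pw (q * (length x div g)) (take g x)"
      proof -
        have "pw q x = pw q (pw (length x div g) (take g x))" using xg by (rule arg_cong)
        then show ?thesis using mx by (simp only: pw_mult)
      qed
      have c1: "length x div g * g = length x" using gd by simp
      have c2: "q * p0 = l" using p0 by (simp add: q_def)
      have cnt: "q * (length x div g) * g = l"
        using c1 c2 lx by (simp only: mult.assoc)
      have tg: "take g m = take g x"
        using lx glt by (simp add: x_def)
      have "g dvd l" using dvd_trans[OF gd[unfolded lx] p0(2)] .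
      have "l div g = q * (length x div g)" using g0 by (simp add: cnt[symmetric])
      then have "g \<in> P" using g0 \<open>g dvd l\<close> mg tg by (simp add: P_def)
      then show False using p0min glt by fastforce
    qed
    have "val x \<le> val (rotate i x)"
    proof (rule ccontr)
      assume "\<not> ?thesis"
      then have "val (pw q (rotate i x)) < val (pw q x)" using q0 by (intro val_pw_mono) auto
      then show False using le by simp
    qed
    moreover have "val x \<noteq> val (rotate i x)" 
    proof
      assume "val x = val (rotate i x)"
      then show False using ne val_inj[of x "rotate i x"] by simp
    qed
    ultimately have "val x < val (rotate i x)" by simp
    then show "(x, rotate i x) \<in> lexord letter_less" by (intro val_lexord) simp_all
  qed
  have "rotate i0 s = pw q x" using mx m_def by simp
  then show ?thesis using q0 lyn by blast
qed


lemma sum_step: "a \<le> b \<Longrightarrow> sum_list (map (step a b) w) = length w * a + count_list w Lb * (b - a)"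
proof (induction w)
  case (Cons x w) then show ?case by (cases x) (auto simp: step_def)
qed simp

lemma psi_append: "v < n \<Longrightarrow> psi n a b (u @ u') v = psi n a b u v @ psi n a b u' ((v + sum_list (map (step a b) u)) mod n)"
proof (induction u arbitrary: v)
  case (Cons x u)
  have "(v + step a b x) mod n < n" using Cons.prems by simp
  from Cons.IH[OF this] show ?case by (simp add: mod_add_left_eq add.assoc)
qed simp

lemma psi_pw: "v < n \<Longrightarrow> (v + sum_list (map (step a b) u)) mod n = v \<Longrightarrow> psi n a b (pw d u) v = pw d (psi n a b u v)"
  by (induction d) (auto simp: psi_append)

lemma length_psi[simp]: "length (psi n a b w v) = length w"
  by (induction w arbitrary: v) auto

definition lt :: "nat \<Rightarrow> nat \<Rightarrow> bond \<Rightarrow> letter" where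
  "lt n b e = (if snd e = (fst e + b) mod n then Lb else La)"

lemma mod2: "(x::nat) < 2 * n \<Longrightarrow> x mod n = (if x < n then x else x - n)"
  by (auto simp: le_mod_geq)

lemma ab_ne: "(u::nat) < n \<Longrightarrow> a < b \<Longrightarrow> b < n \<Longrightarrow> (u + a) mod n \<noteq> (u + b) mod n"
  using mod2[of "u+a" n] mod2[of "u+b" n] by (auto split: if_splits)

lemma is_path_Cons: "is_path n a b (e # c) \<longleftrightarrow> e \<in> bonds n a b \<and> is_path n a b c \<and> (c \<noteq> [] \<longrightarrow> snd e = fst (hd c))"
proof
  assume p: "is_path n a b (e # c)"
  have "\<forall>i. Suc i < length c \<longrightarrow> snd (c ! i) = fst (c ! Suc i)"
  proof (intro allI impI)
    fix i assume "Suc i < length c"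
    then show "snd (c ! i) = fst (c ! Suc i)" using p unfolding is_path_def
      by (metis Suc_less_eq length_Cons nth_Cons_Suc)
  qed
  moreover have "c \<noteq> [] \<longrightarrow> snd e = fst (hd c)" using p unfolding is_path_def
    by (metis hd_conv_nth length_Cons length_greater_0_conv nth_Cons_0 nth_Cons_Suc Suc_less_eq)
  ultimately show "e \<in> bonds n a b \<and> is_path n a b c \<and> (c \<noteq> [] \<longrightarrow> snd e = fst (hd c))"
    using p by (auto simp: is_path_def)
next
  assume h: "e \<in> bonds n a b \<and> is_path n a b c \<and> (c \<noteq> [] \<longrightarrow> snd e = fst (hd c))"
  show "is_path n a b (e # c)" unfolding is_path_def
  proof (intro conjI allI impI)
    show "set (e # c) \<subseteq> bonds n a b" using h by (auto simp: is_path_def)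
    fix i assume i: "Suc i < length (e # c)"
    show "snd ((e # c) ! i) = fst ((e # c) ! Suc i)"
    proof (cases i)
      case 0 then show ?thesis using h i by (auto simp: hd_conv_nth)
    next
      case (Suc j) then show ?thesis using h i by (auto simp: is_path_def)
    qed
  qed
qed

lemma path_psi:
  assumes "0 < a" "a < b" "b < n"
  shows "is_path n a b c \<Longrightarrow> c \<noteq> [] \<Longrightarrow> c = psi n a b (map (lt n b) c) (fst (hd c))"
proof (induction c)
  case Nil then show ?case by simp
next
  case (Cons e c)
  from Cons.prems have eb: "e \<in> bonds n a b" and pc: "is_path n a b c"
    and ad: "c \<noteq> [] \<longrightarrow> snd e = fst (hd c)" by (auto simp: is_path_Cons)
  obtain u w where e: "e = (u, w)" by (cases e)
  have u: "u < n" and uw: "w = (u + a) mod n \<or> w = (u + b) mod n" using eb e by (auto simp: bonds_def)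
  have st: "(u + step a b (lt n b e)) mod n = w"
    using uw ab_ne[OF u assms(2,3)] e by (auto simp: lt_def step_def)
  show ?case
  proof (cases "c = []")
    case True then show ?thesis using e st by simp
  next
    case False
    then have "c = psi n a b (map (lt n b) c) w" using Cons.IH pc ad e by simp
    then show ?thesis using e st by simp
  qed
qed

lemma bcount_lt: "bcount n b c = count_list (map (lt n b) c) Lb"
  by (induction c) (auto simp: bcount_def lt_def split: prod.splits)

lemma circuit_cyc: "is_circuit n a b c \<longleftrightarrow> c \<noteq> [] \<and> set c \<subseteq> bonds n a b \<and>
   (\<forall>i < length c. snd (c ! i) = fst (c ! (Suc i mod length c)))"
proof
  assume h: "is_circuit n a b c"
  then have ne: "c \<noteq> []" and s: "set c \<subseteq> bonds n a b"
    and ad: "\<forall>i. Suc i < length c \<longrightarrow> snd (c ! i) = fst (c ! Suc i)"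
    and cl: "snd (last c) = fst (hd c)" by (auto simp: is_circuit_def is_path_def)
  have "snd (c ! i) = fst (c ! (Suc i mod length c))" if i: "i < length c" for i
  proof (cases "Suc i < length c")
    case True then show ?thesis using ad by simp
  next
    case False
    then have "Suc i = length c" using i by simp
    then have "i = length c - 1" by simp
    then show ?thesis using cl ne by (simp add: last_conv_nth hd_conv_nth)
  qed
  then show "c \<noteq> [] \<and> set c \<subseteq> bonds n a b \<and> (\<forall>i < length c. snd (c ! i) = fst (c ! (Suc i mod length c)))"
    using ne s by auto
next
  assume h: "c \<noteq> [] \<and> set c \<subseteq> bonds n a b \<and> (\<forall>i < length c. snd (c ! i) = fst (c ! (Suc i mod length c)))"
  then have ne: "c \<noteq> []" and cy: "\<And>i. i < length c \<Longrightarrow> snd (c ! i) = fst (c ! (Suc i mod length c))" by auto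
  have "snd (c ! (length c - 1)) = fst (c ! 0)" using cy[of "length c - 1"] ne by simp
  then have "snd (last c) = fst (hd c)" using ne by (simp add: last_conv_nth hd_conv_nth)
  moreover have "\<forall>i. Suc i < length c \<longrightarrow> snd (c ! i) = fst (c ! Suc i)" using cy by simp
  ultimately show "is_circuit n a b c" using h by (auto simp: is_circuit_def is_path_def)
qed

lemma circuit_rotate:
  assumes "is_circuit n a b c" shows "is_circuit n a b (rotate k c)"
proof -
  have ne: "c \<noteq> []" and s: "set c \<subseteq> bonds n a b"
    and cy: "\<And>i. i < length c \<Longrightarrow> snd (c ! i) = fst (c ! (Suc i mod length c))"
    using assms by (auto simp: circuit_cyc)
  have "snd (rotate k c ! i) = fst (rotate k c ! (Suc i mod length c))" if i: "i < length c" for i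
  proof -
    have L: "0 < length c" using ne by simp
    have "rotate k c ! i = c ! ((k + i) mod length c)" using i by (simp add: nth_rotate)
    moreover have "rotate k c ! (Suc i mod length c) = c ! ((k + Suc i mod length c) mod length c)"
      using L by (simp add: nth_rotate)
    moreover have "(k + Suc i mod length c) mod length c = Suc ((k + i) mod length c) mod length c"
      by (simp add: mod_add_right_eq mod_Suc_eq)
    ultimately show ?thesis using cy[of "(k + i) mod length c"] L by simp
  qed
  then show ?thesis using ne s by (auto simp: circuit_cyc)
qed

lemma orbit_alt: "c \<noteq> [] \<Longrightarrow> orbit c = range (\<lambda>j. rotate j c)"
  unfolding orbit_def
proof (intro equalityI subsetI)
  fix y assume "c \<noteq> []" "y \<in> range (\<lambda>j. rotate j c)"
  then obtain j where "y = rotate j c" by auto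
  then have "y = rotate (j mod length c) c" by (simp flip: rotate_conv_mod)
  then show "y \<in> {rotate i c |i. i < length c}" using \<open>c \<noteq> []\<close> by auto
qed auto

lemma orbit_rotate:
  assumes ne: "c \<noteq> []" shows "orbit (rotate i c) = orbit c"
proof -
  have ne': "rotate i c \<noteq> []" using ne by simp
  have "range (\<lambda>j. rotate j (rotate i c)) = range (\<lambda>j. rotate j c)"
  proof (intro equalityI subsetI)
    fix y assume "y \<in> range (\<lambda>j. rotate j (rotate i c))"
    then show "y \<in> range (\<lambda>j. rotate j c)" by (auto simp: rotate_rotate)
  next
    fix y assume "y \<in> range (\<lambda>j. rotate j c)"
    then obtain j where y: "y = rotate j c" by auto
    have L: "0 < length c" using ne by simp
    have "(j + length c * i) mod length c = j mod length c" by simp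
    then have "rotate j c = rotate (j + length c * i) c" by (metis rotate_conv_mod)
    also have "j + length c * i = (j + length c * i - i) + i" proof -
      have "1 * i \<le> length c * i" using L by (intro mult_right_mono) (auto simp: Suc_le_eq)
      then show ?thesis by linarith
    qed
    also have "rotate (j + length c * i - i + i) c = rotate (j + length c * i - i) (rotate i c)"
      by (simp add: rotate_rotate)
    finally show "y \<in> range (\<lambda>j. rotate j (rotate i c))" using y by blast
  qed
  then show ?thesis using ne ne' by (simp add: orbit_alt)
qed

lemma circuit_prefix:
  assumes h: "is_circuit n a b (c0 @ c0 @ r)" and ne: "c0 \<noteq> []"
  shows "is_circuit n a b c0"
proof -
  let ?c = "c0 @ c0 @ r"
  have s: "set ?c \<subseteq> bonds n a b" and ad: "\<And>i. Suc i < length ?c \<Longrightarrow> snd (?c ! i) = fst (?c ! Suc i)"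
    using h by (auto simp: is_circuit_def is_path_def)
  have "\<forall>i. Suc i < length c0 \<longrightarrow> snd (c0 ! i) = fst (c0 ! Suc i)"
  proof (intro allI impI)
    fix i assume i: "Suc i < length c0"
    then show "snd (c0 ! i) = fst (c0 ! Suc i)" using ad[of i] by (simp add: nth_append)
  qed
  moreover have "snd (last c0) = fst (hd c0)"
  proof -
    have "snd (?c ! (length c0 - 1)) = fst (?c ! Suc (length c0 - 1))" using ad[of "length c0 - 1"] ne by simp
    then show ?thesis using ne by (simp add: nth_append last_conv_nth hd_conv_nth)
  qed
  ultimately show ?thesis using s ne by (auto simp: is_circuit_def is_path_def)
qed


lemma count_rotate: "count_list (rotate i s) y = count_list s y"
proof -
  have "count_list s y = count_list (take (i mod length s) s @ drop (i mod length s) s) y" by simp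
  then show ?thesis by (simp add: rotate_drop_take del: append_take_drop_id)
qed

lemma sum_pw: "sum_list (map f (pw r x)) = r * sum_list (map f x)"
  by (induction r) auto

theorem mainTheorem13:
  fixes n a b l k \<omega> :: nat
  assumes "2 \<le> n" and "0 < a" and "a < b" and "b < n"
    and "gcd n (gcd a b) = 1"
    and "1 \<le> l" and "k \<le> l"
    and "0 < \<omega>" and "l * a + k * (b - a) = \<omega> * n"
  shows "\<forall>p \<in> prim_orbits n a b l k.
           \<exists>q w v. 0 < q \<and> q dvd gcd l k \<and> coprime q \<omega> \<and> w \<in> L2q q l k \<and> v < n
                 \<and> is_circuit n a b (psi n a b w v) \<and> p = phi n a b w v"
proof
  fix p assume "p \<in> prim_orbits n a b l k"
  then obtain c where c: "is_circuit n a b c" "length c = l" "bcount n b c = k"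
    "primitive_orbit n a b (orbit c)" "p = orbit c" by (auto simp: prim_orbits_def)
  have cne: "c \<noteq> []" using c(1) by (simp add: is_circuit_def)
  define s where "s = map (lt n b) c"
  have sne: "s \<noteq> []" using cne s_def by simp
  obtain i q x where q0: "0 < q" and rs: "rotate i s = pw q x" and lyn: "lyndon x"
    using word_lemma[OF sne] by blast
  define c' where "c' = rotate i c"
  define w where "w = pw q x"
  have c'c: "is_circuit n a b c'" using circuit_rotate[OF c(1)] by (simp add: c'_def)
  have c'ne: "c' \<noteq> []" using cne by (simp add: c'_def)
  have mc': "map (lt n b) c' = w" using rs by (simp add: c'_def w_def s_def rotate_map)
  define v where "v = fst (hd c')"
  have "hd c' \<in> bonds n a b" using c'c c'ne by (auto simp: is_circuit_def is_path_def)
  then have vn: "v < n" by (auto simp: v_def bonds_def)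
  have c'psi: "c' = psi n a b w v"
    using path_psi[OF assms(2,3,4)] c'c c'ne mc' by (auto simp: is_circuit_def v_def)
  have lw: "q * length x = l" using rs c(2) by (metis length_map length_pw length_rotate s_def)
  have kw: "q * count_list x Lb = k"
  proof -
    have "count_list s Lb = k" using c(3) by (simp add: s_def bcount_lt)
    moreover have "count_list (rotate i s) Lb = count_list s Lb" by (rule count_rotate)
    ultimately show ?thesis using rs by (simp add: count_pw)
  qed
  have ql: "q dvd l" using lw by (metis dvd_triv_left)
  have qk: "q dvd k" using kw by (metis dvd_triv_left)
  have xL2: "x \<in> L2 (l div q) (k div q)" using lyn lw kw q0 by (auto simp: L2_def)
  have wL: "w \<in> L2q q l k" using xL2 by (auto simp: L2q_def w_def)
  have orb: "p = phi n a b w v" using c(5) orbit_rotate[OF cne, of i] c'psi by (simp add: phi_def c'_def)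
  have cop: "coprime q \<omega>"
  proof (rule ccontr)
    assume nc: "\<not> coprime q \<omega>"
    define d where "d = gcd q \<omega>"
    have dp: "d > 0" using q0 by (simp add: d_def)
    have "d \<noteq> 1" using nc by (simp add: d_def coprime_iff_gcd_eq_1)
    then have d1: "d > 1" using dp by linarith
    define r where "r = q div d"
    have qdr: "q = d * r" by (simp add: r_def d_def)
    have r0: "0 < r" using q0 qdr by (simp add: gr0I)
    define S where "S = sum_list (map (step a b) x)"
    have "sum_list (map (step a b) w) = q * S"
      by (simp add: w_def S_def sum_pw)
    moreover have "sum_list (map (step a b) w) = \<omega> * n"
      using sum_step[of a b w] assms(3,9) lw kw by (simp add: w_def count_pw)
    ultimately have qS: "q * S = \<omega> * n" by simp
    have ddv: "d dvd \<omega>" by (simp add: d_def)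
    have "d * (r * S) = q * S" using qdr by (simp add: mult.assoc)
    also have "\<dots> = d * (\<omega> div d) * n" using qS ddv by simp
    finally have "d * (r * S) = d * ((\<omega> div d) * n)" by (simp add: mult.assoc)
    then have rS: "r * S = (\<omega> div d) * n" using d1 by simp
    define u where "u = pw r x"
    have su: "sum_list (map (step a b) u) = r * S"
      by (simp add: u_def S_def sum_pw)
    have pend: "(v + sum_list (map (step a b) u)) mod n = v" using su rS vn by simp
    have wu: "w = pw d u" by (simp add: w_def u_def pw_mult qdr)
    define c0 where "c0 = psi n a b u v"
    have c'0: "c' = pw d c0" using c'psi wu psi_pw[OF vn pend] by (simp add: c0_def)
    have lc0: "length c0 = r * length x" by (simp add: c0_def u_def)
    have "x \<noteq> []" using lyn by (simp add: lyndon_def)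
    then have c0ne: "c0 \<noteq> []" using lc0 r0 by (metis length_0_conv mult_is_0 not_gr0)
    obtain d' where dd: "d = Suc (Suc d')" using d1 by (cases d; cases "d - 1") auto
    have "c' = c0 @ c0 @ pw d' c0" using c'0 dd by simp
    then have "is_circuit n a b (c0 @ c0 @ pw d' c0)" using c'c by simp
    then have "is_circuit n a b c0" using circuit_prefix c0ne by blast
    moreover have "orbit c = orbit (pw d c0)" using orbit_rotate[OF cne, of i] c'0 by (simp add: c'_def)
    ultimately show False using c(4) d1 by (auto simp: primitive_orbit_def)
  qed
  show "\<exists>q w v. 0 < q \<and> q dvd gcd l k \<and> coprime q \<omega> \<and> w \<in> L2q q l k \<and> v < n
                 \<and> is_circuit n a b (psi n a b w v) \<and> p = phi n a b w v"
  proof (intro exI conjI)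
    show "q dvd gcd l k" using ql qk by simp
    show "is_circuit n a b (psi n a b w v)" using c'c c'psi by simp
  qed (use q0 cop wL vn orb in auto)
qed

end
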